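(* If a simple protocol $\Pi$ with $m$ memory states is not parsimonious, then there exists a parsimonious protocol $\Pi'$ with at most $m$ memory states such that $U^R(\Pi)\le U^R(\Pi')$.
   Context: Setting. The state of nature is $\theta\in\Theta=\{H,L\}$ with prior $\Pr(\theta=H)=p\in(0,1)$. A sender privately observes $\theta$; a receiver does not. $S$ is a finite signal set; conditional on $\theta$, signals are i.i.d. with distribution $\pi_\theta$ on $S$, where $\pi_\theta(s)>0$ for all $s\in S,\theta\in\Theta$, and $\pi_H\neq\pi_L$. The receiver has a finite set of memory states $M$ and chooses a protocol $\Pi=(f,g,a)$: a transition function $f:M\times S\to\Delta(M)$ ($f(i,s)(j)$ is the probability of moving from memory state $i$ to $j$ after signal $s$), an initial distribution $g\in\Delta(M)$ of $m_0$, and an action rule $a:M\to[0,1]$ (probability of action $H$ if the game ends in that memory state). A sender strategy is $\sigma:M\times\Theta\to[0,1]$, the probability of stopping in the current memory state given $\theta$. Timing: $m_0\sim g$; in each period $t=0,1,\dots$, with current memory state $m_t$, the game ends if $m_t$ is absorbing ($f(m_t,s)(m_t)=1$ for all $s$); otherwise the sender stops with probability $\sigma(m_t,\theta)$, ending the game; if not stopped, a signal $s_t\sim\pi_\theta$ is generated and $m_{t+1}\sim f(m_t,s_t)$. When the game ends in state $m_t$ the receiver takes action $H$ with probability $a(m_t)$ and $L$ otherwise. The receiver's payoff is $1$ if the action equals $\theta$ and $0$ otherwise; the sender's payoff is $1$ if the action is $H$ and $0$ otherwise; there is no discounting; if the game never ends both get $0$. $U^S(\Pi,\sigma),U^R(\Pi,\sigma)$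 denote expected payoffs, $\mathrm{br}(\Pi)=\arg\sup_\sigma U^S(\Pi,\sigma)$ is the set of sender best responses, and $U^R(\Pi):=U^R(\Pi,\sigma)$ for $\sigma\in\mathrm{br}(\Pi)$. Since $\pi_\theta$ has full support, which transitions $i\to j$ have positive probability does not depend on $\theta$; the terms absorbing, transient, recurrent communicating class applied to $\Pi$ refer to the Markov chain on $M$ induced by $f$ with signals drawn from $\pi_\theta$ (sender never stopping), and mean the same for both $\theta$. A protocol is simple if it has exactly two absorbing memory states and all other memory states are transient. A protocol is parsimonious if (i) it has exactly two absorbing memory states, one in which $a=0$ and one in which $a=1$, and (ii) all other memory states are transient with $a=0$. *)

theory Defs
  imports Complex_Main
begin

datatype theta = H | L

text \<open>A protocol with n memory states, numbered 0..<n.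
  trans i s j = f(i,s)(j); init j = g(j); act i = a(i).\<close>
record 's protocol =
  nst   :: nat
  trans :: "nat \<Rightarrow> 's \<Rightarrow> nat \<Rightarrow> real"
  init  :: "nat \<Rightarrow> real"
  act   :: "nat \<Rightarrow> real"

definition valid_protocol :: "'s::finite protocol \<Rightarrow> bool" where
  "valid_protocol P \<longleftrightarrow> nst P \<ge> 1 \<and>
     (\<forall>i<nst P. \<forall>s. (\<forall>j<nst P. trans P i s j \<ge> 0) \<and> (\<Sum>j<nst P. trans P i s j) = 1) \<and>
     (\<forall>j<nst P. init P j \<ge> 0) \<and> (\<Sum>j<nst P. init P j) = 1 \<and>
     (\<forall>i<nst P. 0 \<le> act P i \<and> act P i \<le> 1)"

definition kernel :: "(theta \<Rightarrow> 's::finite \<Rightarrow> real) \<Rightarrow> 's protocol \<Rightarrow> theta \<Rightarrow> nat \<Rightarrow> nat \<Rightarrow> real" where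
  "kernel \<pi> P \<theta> i j = (\<Sum>s\<in>UNIV. \<pi> \<theta> s * trans P i s j)"

definition absorbing :: "'s protocol \<Rightarrow> nat \<Rightarrow> bool" where
  "absorbing P i \<longleftrightarrow> (\<forall>s. trans P i s i = 1)"

text \<open>Mass of paths started at i that have not yet returned to i, after t+1 steps.\<close>
fun taboo :: "(theta \<Rightarrow> 's::finite \<Rightarrow> real) \<Rightarrow> 's protocol \<Rightarrow> theta \<Rightarrow> nat \<Rightarrow> nat \<Rightarrow> nat \<Rightarrow> real" where
  "taboo \<pi> P \<theta> i 0 j = kernel \<pi> P \<theta> i j"
| "taboo \<pi> P \<theta> i (Suc t) j =
     (\<Sum>k<nst P. if k = i then 0 else taboo \<pi> P \<theta> i t k * kernel \<pi> P \<theta> k j)"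

definition return_prob :: "(theta \<Rightarrow> 's::finite \<Rightarrow> real) \<Rightarrow> 's protocol \<Rightarrow> theta \<Rightarrow> nat \<Rightarrow> real" where
  "return_prob \<pi> P \<theta> i = (\<Sum>t. taboo \<pi> P \<theta> i t i)"

definition transient :: "(theta \<Rightarrow> 's::finite \<Rightarrow> real) \<Rightarrow> 's protocol \<Rightarrow> theta \<Rightarrow> nat \<Rightarrow> bool" where
  "transient \<pi> P \<theta> i \<longleftrightarrow> return_prob \<pi> P \<theta> i < 1"

definition simple :: "(theta \<Rightarrow> 's::finite \<Rightarrow> real) \<Rightarrow> 's protocol \<Rightarrow> bool" where
  "simple \<pi> P \<longleftrightarrow> card {i. i < nst P \<and> absorbing P i} = 2 \<and>
     (\<forall>i<nst P. \<not> absorbing P i \<longrightarrow> (\<forall>\<theta>. transient \<pi> P \<theta> i))"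

definition parsimonious :: "(theta \<Rightarrow> 's::finite \<Rightarrow> real) \<Rightarrow> 's protocol \<Rightarrow> bool" where
  "parsimonious \<pi> P \<longleftrightarrow> (\<exists>h l. h < nst P \<and> l < nst P \<and> h \<noteq> l \<and>
     {i. i < nst P \<and> absorbing P i} = {h, l} \<and> act P h = 1 \<and> act P l = 0 \<and>
     (\<forall>i<nst P. i \<noteq> h \<and> i \<noteq> l \<longrightarrow> (\<forall>\<theta>. transient \<pi> P \<theta> i) \<and> act P i = 0))"

text \<open>Sender strategy: sigma i theta = probability of stopping in memory state i given theta.\<close>
definition valid_strategy :: "'s protocol \<Rightarrow> (nat \<Rightarrow> theta \<Rightarrow> real) \<Rightarrow> bool" where
  "valid_strategy P \<sigma> \<longleftrightarrow> (\<forall>i<nst P. \<forall>\<theta>. 0 \<le> \<sigma> i \<theta> \<and> \<sigma> i \<theta> \<le> 1)"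

text \<open>alive t j: probability that the game has not ended before period t and m_t = j.\<close>
fun alive :: "(theta \<Rightarrow> 's::finite \<Rightarrow> real) \<Rightarrow> 's protocol \<Rightarrow> (nat \<Rightarrow> theta \<Rightarrow> real) \<Rightarrow> theta \<Rightarrow> nat \<Rightarrow> nat \<Rightarrow> real" where
  "alive \<pi> P \<sigma> \<theta> 0 j = init P j"
| "alive \<pi> P \<sigma> \<theta> (Suc t) j =
     (\<Sum>i<nst P. if absorbing P i then 0 else alive \<pi> P \<sigma> \<theta> t i * (1 - \<sigma> i \<theta>) * kernel \<pi> P \<theta> i j)"

definition ends :: "(theta \<Rightarrow> 's::finite \<Rightarrow> real) \<Rightarrow> 's protocol \<Rightarrow> (nat \<Rightarrow> theta \<Rightarrow> real) \<Rightarrow> theta \<Rightarrow> nat \<Rightarrow> nat \<Rightarrow> real" where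
  "ends \<pi> P \<sigma> \<theta> t i = (if absorbing P i then alive \<pi> P \<sigma> \<theta> t i else alive \<pi> P \<sigma> \<theta> t i * \<sigma> i \<theta>)"

definition prob_actH :: "(theta \<Rightarrow> 's::finite \<Rightarrow> real) \<Rightarrow> 's protocol \<Rightarrow> (nat \<Rightarrow> theta \<Rightarrow> real) \<Rightarrow> theta \<Rightarrow> real" where
  "prob_actH \<pi> P \<sigma> \<theta> = (\<Sum>t. \<Sum>i<nst P. ends \<pi> P \<sigma> \<theta> t i * act P i)"

definition prob_actL :: "(theta \<Rightarrow> 's::finite \<Rightarrow> real) \<Rightarrow> 's protocol \<Rightarrow> (nat \<Rightarrow> theta \<Rightarrow> real) \<Rightarrow> theta \<Rightarrow> real" where
  "prob_actL \<pi> P \<sigma> \<theta> = (\<Sum>t. \<Sum>i<nst P. ends \<pi> P \<sigma> \<theta> t i * (1 - act P i))"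

definition US :: "real \<Rightarrow> (theta \<Rightarrow> 's::finite \<Rightarrow> real) \<Rightarrow> 's protocol \<Rightarrow> (nat \<Rightarrow> theta \<Rightarrow> real) \<Rightarrow> real" where
  "US p \<pi> P \<sigma> = p * prob_actH \<pi> P \<sigma> H + (1 - p) * prob_actH \<pi> P \<sigma> L"

definition UR :: "real \<Rightarrow> (theta \<Rightarrow> 's::finite \<Rightarrow> real) \<Rightarrow> 's protocol \<Rightarrow> (nat \<Rightarrow> theta \<Rightarrow> real) \<Rightarrow> real" where
  "UR p \<pi> P \<sigma> = p * prob_actH \<pi> P \<sigma> H + (1 - p) * prob_actL \<pi> P \<sigma> L"

definition br :: "real \<Rightarrow> (theta \<Rightarrow> 's::finite \<Rightarrow> real) \<Rightarrow> 's protocol \<Rightarrow> (nat \<Rightarrow> theta \<Rightarrow> real) set" where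
  "br p \<pi> P = {\<sigma>. valid_strategy P \<sigma> \<and> (\<forall>\<sigma>'. valid_strategy P \<sigma>' \<longrightarrow> US p \<pi> P \<sigma>' \<le> US p \<pi> P \<sigma>)}"

definition URP :: "real \<Rightarrow> (theta \<Rightarrow> 's::finite \<Rightarrow> real) \<Rightarrow> 's protocol \<Rightarrow> real" where
  "URP p \<pi> P = UR p \<pi> P (SOME \<sigma>. \<sigma> \<in> br p \<pi> P)"

end

theory Submission
  imports Defs "HOL-Analysis.Analysis"
begin


locale prot =
  fixes \<pi> :: "theta \<Rightarrow> 's::finite \<Rightarrow> real" and P :: "'s protocol"
  assumes pi_nn: "\<And>\<theta> s. \<pi> \<theta> s \<ge> 0"
    and pi_sum: "\<And>\<theta>. (\<Sum>s\<in>UNIV. \<pi> \<theta> s) = 1"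
    and valid: "valid_protocol P"
begin

abbreviation "n \<equiv> nst P"
abbreviation "K \<equiv> kernel \<pi> P"

lemma n_pos: "n \<ge> 1" using valid by (simp add: valid_protocol_def)

lemma trans_nn: "i < n \<Longrightarrow> j < n \<Longrightarrow> trans P i s j \<ge> 0"
  using valid by (simp add: valid_protocol_def)

lemma trans_sum: "i < n \<Longrightarrow> (\<Sum>j<n. trans P i s j) = 1"
  using valid by (simp add: valid_protocol_def)

lemma trans_le1: "i < n \<Longrightarrow> j < n \<Longrightarrow> trans P i s j \<le> 1"
proof -
  assume a: "i < n" "j < n"
  have "trans P i s j \<le> (\<Sum>j<n. trans P i s j)"
    by (rule member_le_sum) (use a trans_nn in auto)
  then show ?thesis using trans_sum a by simp
qed

lemma init_nn: "j < n \<Longrightarrow> init P j \<ge> 0"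
  using valid by (simp add: valid_protocol_def)

lemma init_sum: "(\<Sum>j<n. init P j) = 1"
  using valid by (simp add: valid_protocol_def)

lemma act_nn: "i < n \<Longrightarrow> act P i \<ge> 0"
  using valid by (simp add: valid_protocol_def)

lemma act_le1: "i < n \<Longrightarrow> act P i \<le> 1"
  using valid by (simp add: valid_protocol_def)

lemma K_nn: "i < n \<Longrightarrow> j < n \<Longrightarrow> K \<theta> i j \<ge> 0"
  unfolding kernel_def by (intro sum_nonneg mult_nonneg_nonneg pi_nn trans_nn)

lemma K_sum: "i < n \<Longrightarrow> (\<Sum>j<n. K \<theta> i j) = 1"
proof -
  assume i: "i < n"
  have "(\<Sum>j<n. K \<theta> i j) = (\<Sum>s\<in>UNIV. \<pi> \<theta> s * (\<Sum>j<n. trans P i s j))"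
    unfolding kernel_def by (subst sum.swap) (simp add: sum_distrib_left)
  also have "\<dots> = 1" using trans_sum[OF i] pi_sum by simp
  finally show ?thesis .
qed

lemma K_le1: "i < n \<Longrightarrow> j < n \<Longrightarrow> K \<theta> i j \<le> 1"
proof -
  assume a: "i < n" "j < n"
  have "K \<theta> i j \<le> (\<Sum>j<n. K \<theta> i j)"
    by (rule member_le_sum) (use a K_nn in auto)
  then show ?thesis using K_sum a by simp
qed

lemma abs_trans: "i < n \<Longrightarrow> absorbing P i \<Longrightarrow> j < n \<Longrightarrow> j \<noteq> i \<Longrightarrow> trans P i s j = 0"
proof -
  assume a: "i < n" "absorbing P i" "j < n" "j \<noteq> i"
  have "(\<Sum>k<n. trans P i s k) = trans P i s i + (\<Sum>k\<in>{..<n}-{i}. trans P i s k)"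
    using a by (subst sum.remove[of _ i]) auto
  also have "\<dots> \<ge> 1 + trans P i s j"
    using a by (auto simp: absorbing_def intro!: member_le_sum trans_nn)
  finally show ?thesis using trans_sum[of i s] trans_nn[of i j s] a by simp
qed

lemma abs_K: "i < n \<Longrightarrow> absorbing P i \<Longrightarrow> j < n \<Longrightarrow> j \<noteq> i \<Longrightarrow> K \<theta> i j = 0"
  unfolding kernel_def by (simp add: abs_trans)

definition vs :: "(nat \<Rightarrow> theta \<Rightarrow> real) \<Rightarrow> theta \<Rightarrow> bool" where
  "vs \<rho> \<theta> \<longleftrightarrow> (\<forall>i<n. 0 \<le> \<rho> i \<theta> \<and> \<rho> i \<theta> \<le> 1)"

abbreviation "z \<equiv> (\<lambda>(_::nat) (_::theta). 0::real)"

lemma vs_z: "vs z \<theta>" by (simp add: vs_def)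

lemma alive_nn: "vs \<rho> \<theta> \<Longrightarrow> j < n \<Longrightarrow> alive \<pi> P \<rho> \<theta> t j \<ge> 0"
proof (induction t arbitrary: j)
  case 0 then show ?case by (simp add: init_nn)
next
  case (Suc t) then show ?case
    by (auto simp: vs_def intro!: sum_nonneg mult_nonneg_nonneg K_nn)
qed

lemma alive_mono: "vs \<rho> \<theta> \<Longrightarrow> j < n \<Longrightarrow> alive \<pi> P \<rho> \<theta> t j \<le> alive \<pi> P z \<theta> t j"
proof (induction t arbitrary: j)
  case 0 then show ?case by simp
next
  case (Suc t) 
  show ?case unfolding alive.simps
  proof (rule sum_mono)
    fix i assume i: "i \<in> {..<n}"
    have "alive \<pi> P \<rho> \<theta> t i * (1 - \<rho> i \<theta>) * K \<theta> i j \<le> alive \<pi> P \<rho> \<theta> t i * K \<theta> i j"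
      using Suc.prems i alive_nn[of \<rho> \<theta> i t] K_nn[of i j \<theta>]
      by (auto simp: vs_def intro!: mult_right_mono mult_left_le)
    also have "\<dots> \<le> alive \<pi> P z \<theta> t i * K \<theta> i j"
      using Suc i K_nn[of i j \<theta>] by (auto intro!: mult_right_mono)
    finally show "(if absorbing P i then 0 else alive \<pi> P \<rho> \<theta> t i * (1 - \<rho> i \<theta>) * K \<theta> i j)
         \<le> (if absorbing P i then 0 else alive \<pi> P z \<theta> t i * (1 - z i \<theta>) * K \<theta> i j)" by simp
  qed
qed

lemma ends_nn: "vs \<rho> \<theta> \<Longrightarrow> i < n \<Longrightarrow> ends \<pi> P \<rho> \<theta> t i \<ge> 0"
  using alive_nn by (auto simp: ends_def vs_def)

lemma ends_le: "vs \<rho> \<theta> \<Longrightarrow> i < n \<Longrightarrow> ends \<pi> P \<rho> \<theta> t i \<le> alive \<pi> P \<rho> \<theta> t i"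
  using alive_nn[of \<rho> \<theta> i t] by (auto simp: ends_def vs_def intro: mult_left_le)

lemma mass_step: "vs \<rho> \<theta> \<Longrightarrow>
   (\<Sum>j<n. alive \<pi> P \<rho> \<theta> (Suc t) j) = (\<Sum>i<n. alive \<pi> P \<rho> \<theta> t i) - (\<Sum>i<n. ends \<pi> P \<rho> \<theta> t i)"
proof -
  have "(\<Sum>j<n. alive \<pi> P \<rho> \<theta> (Suc t) j) =
     (\<Sum>i<n. if absorbing P i then 0 else alive \<pi> P \<rho> \<theta> t i * (1 - \<rho> i \<theta>) * (\<Sum>j<n. K \<theta> i j))"
    unfolding alive.simps by (subst sum.swap) (auto simp: sum_distrib_left intro!: sum.cong)
  also have "\<dots> = (\<Sum>i<n. alive \<pi> P \<rho> \<theta> t i - ends \<pi> P \<rho> \<theta> t i)"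
    by (rule sum.cong) (auto simp: K_sum ends_def algebra_simps)
  finally show ?thesis by (simp add: sum_subtractf)
qed

lemma mass: "vs \<rho> \<theta> \<Longrightarrow>
   (\<Sum>s<t. \<Sum>i<n. ends \<pi> P \<rho> \<theta> s i) + (\<Sum>i<n. alive \<pi> P \<rho> \<theta> t i) = 1"
proof (induction t)
  case 0 then show ?case by (simp add: init_sum)
next
  case (Suc t) then show ?case using mass_step[of \<rho> \<theta> t] by simp
qed

lemma ends_sum_summable: "vs \<rho> \<theta> \<Longrightarrow> summable (\<lambda>t. \<Sum>i<n. ends \<pi> P \<rho> \<theta> t i)"
proof (rule bounded_imp_summable)
  assume v: "vs \<rho> \<theta>"
  show "\<And>t. 0 \<le> (\<Sum>i<n. ends \<pi> P \<rho> \<theta> t i)" using ends_nn[OF v] by (auto intro!: sum_nonneg)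
  fix t
  have "(\<Sum>s\<le>t. \<Sum>i<n. ends \<pi> P \<rho> \<theta> s i) = (\<Sum>s<Suc t. \<Sum>i<n. ends \<pi> P \<rho> \<theta> s i)"
    by (simp only: lessThan_Suc_atMost)
  also have "\<dots> \<le> 1"
  proof -
    have "0 \<le> (\<Sum>i<n. alive \<pi> P \<rho> \<theta> (Suc t) i)" by (rule sum_nonneg) (use alive_nn[OF v] in blast)
    then show ?thesis using mass[OF v, of "Suc t"] by linarith
  qed
  finally show "(\<Sum>s\<le>t. \<Sum>i<n. ends \<pi> P \<rho> \<theta> s i) \<le> 1" .
qed

lemma alive_cong: "(\<And>i. i < n \<Longrightarrow> \<rho> i \<theta> = \<rho>' i \<theta>) \<Longrightarrow> alive \<pi> P \<rho> \<theta> t j = alive \<pi> P \<rho>' \<theta> t j"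
  by (induction t arbitrary: j) (auto intro!: sum.cong)

lemma probH_cong: "(\<And>i. i < n \<Longrightarrow> \<rho> i \<theta> = \<rho>' i \<theta>) \<Longrightarrow> prob_actH \<pi> P \<rho> \<theta> = prob_actH \<pi> P \<rho>' \<theta>"
  unfolding prob_actH_def ends_def using alive_cong[of \<rho> \<theta> \<rho>'] by (auto intro!: suminf_cong sum.cong)

end



fun itr :: "(theta \<Rightarrow> 's::finite \<Rightarrow> real) \<Rightarrow> 's protocol \<Rightarrow> (nat \<Rightarrow> real) \<Rightarrow> theta \<Rightarrow> nat \<Rightarrow> nat \<Rightarrow> real" where
  "itr \<pi> P v \<theta> 0 j = v j"
| "itr \<pi> P v \<theta> (Suc t) j = (\<Sum>k<nst P. itr \<pi> P v \<theta> t k * kernel \<pi> P \<theta> k j)"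

fun tab :: "(theta \<Rightarrow> 's::finite \<Rightarrow> real) \<Rightarrow> 's protocol \<Rightarrow> nat \<Rightarrow> (nat \<Rightarrow> real) \<Rightarrow> theta \<Rightarrow> nat \<Rightarrow> nat \<Rightarrow> real" where
  "tab \<pi> P i v \<theta> 0 j = v j"
| "tab \<pi> P i v \<theta> (Suc t) j = (\<Sum>k<nst P. if k = i then 0 else tab \<pi> P i v \<theta> t k * kernel \<pi> P \<theta> k j)"

lemma conv_sum:
  fixes a u :: "nat \<Rightarrow> real"
  shows "(\<Sum>m<M. \<Sum>k\<le>m. a k * u (m - k)) = (\<Sum>k<M. a k * (\<Sum>d<M - k. u d))"
proof (induction M)
  case 0 then show ?case by simp
next
  case (Suc M)
  have "(\<Sum>k<Suc M. a k * (\<Sum>d<Suc M - k. u d)) = (\<Sum>k<M. a k * (\<Sum>d<Suc M - k. u d)) + a M * u 0"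
    by simp
  also have "(\<Sum>k<M. a k * (\<Sum>d<Suc M - k. u d)) = (\<Sum>k<M. a k * (\<Sum>d<M - k. u d) + a k * u (M - k))"
    by (rule sum.cong) (auto simp: Suc_diff_le algebra_simps)
  also have "\<dots> = (\<Sum>k<M. a k * (\<Sum>d<M - k. u d)) + (\<Sum>k<M. a k * u (M - k))"
    by (simp add: sum.distrib)
  finally have "(\<Sum>k<Suc M. a k * (\<Sum>d<Suc M - k. u d)) = (\<Sum>k<M. a k * (\<Sum>d<M - k. u d)) + (\<Sum>k\<le>M. a k * u (M - k))"
    by (simp add: lessThan_Suc_atMost[symmetric])
  then show ?case using Suc.IH by simp
qed

context prot
begin

definition dl :: "nat \<Rightarrow> nat \<Rightarrow> real" where "dl i = (\<lambda>j. if j = i then 1 else 0)"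

lemma itr_dl1: "i < n \<Longrightarrow> itr \<pi> P (dl i) \<theta> (Suc 0) j = K \<theta> i j"
proof -
  assume i: "i < n"
  have "itr \<pi> P (dl i) \<theta> (Suc 0) j = (\<Sum>k<n. if k = i then K \<theta> k j else 0)"
    unfolding itr.simps dl_def by (rule sum.cong) auto
  also have "\<dots> = K \<theta> i j" using i by (simp add: sum.delta)
  finally show ?thesis .
qed

lemma dl_row: "i < n \<Longrightarrow> (\<lambda>j. \<Sum>l<n. dl i l * K \<theta> l j) = K \<theta> i"
  using itr_dl1[of i \<theta>] by (intro ext) simp

lemma decomp: "i < n \<Longrightarrow> itr \<pi> P v \<theta> m j = tab \<pi> P i v \<theta> m j +
    (\<Sum>k<m. tab \<pi> P i v \<theta> k i * itr \<pi> P (dl i) \<theta> (m - k) j)"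
proof (induction m arbitrary: j)
  case 0 then show ?case by simp
next
  case (Suc m)
  have "itr \<pi> P v \<theta> (Suc m) j = (\<Sum>l<n. itr \<pi> P v \<theta> m l * K \<theta> l j)" by simp
  also have "\<dots> = (\<Sum>l<n. tab \<pi> P i v \<theta> m l * K \<theta> l j) +
      (\<Sum>l<n. \<Sum>k<m. tab \<pi> P i v \<theta> k i * (itr \<pi> P (dl i) \<theta> (m - k) l * K \<theta> l j))"
    by (simp add: Suc.IH[OF Suc.prems] distrib_right sum.distrib sum_distrib_right mult.assoc)
  also have "(\<Sum>l<n. \<Sum>k<m. tab \<pi> P i v \<theta> k i * (itr \<pi> P (dl i) \<theta> (m - k) l * K \<theta> l j))
      = (\<Sum>k<m. tab \<pi> P i v \<theta> k i * itr \<pi> P (dl i) \<theta> (Suc m - k) j)"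
    by (subst sum.swap) (auto simp: sum_distrib_left Suc_diff_le intro!: sum.cong)
  also have "(\<Sum>l<n. tab \<pi> P i v \<theta> m l * K \<theta> l j) = tab \<pi> P i v \<theta> (Suc m) j + tab \<pi> P i v \<theta> m i * K \<theta> i j"
  proof -
    have "(\<Sum>l<n. tab \<pi> P i v \<theta> m l * K \<theta> l j) = tab \<pi> P i v \<theta> m i * K \<theta> i j +
         (\<Sum>l\<in>{..<n}-{i}. tab \<pi> P i v \<theta> m l * K \<theta> l j)"
      using Suc.prems by (subst sum.remove[of _ i]) auto
    moreover have "tab \<pi> P i v \<theta> (Suc m) j = (\<Sum>l\<in>{..<n}-{i}. tab \<pi> P i v \<theta> m l * K \<theta> l j)"
      using Suc.prems by (simp add: sum.remove[of _ i] sum.If_cases Diff_eq Int_commute)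
    ultimately show ?thesis by simp
  qed
  also have "tab \<pi> P i v \<theta> m i * K \<theta> i j = tab \<pi> P i v \<theta> m i * itr \<pi> P (dl i) \<theta> (Suc m - m) j"
    using itr_dl1[OF Suc.prems] by simp
  finally show ?case by simp
qed

lemma shift: "itr \<pi> P v \<theta> (Suc m) j = itr \<pi> P (\<lambda>j. \<Sum>l<n. v l * K \<theta> l j) \<theta> m j"
  by (induction m arbitrary: j) auto

lemma taboo_tab: "taboo \<pi> P \<theta> i t j = tab \<pi> P i (K \<theta> i) \<theta> t j"
proof (induction t arbitrary: j)
  case 0 then show ?case by simp
next
  case (Suc t)
  show ?case unfolding taboo.simps tab.simps by (rule sum.cong) (simp_all add: Suc.IH)
qed

lemma itr_nn: "(\<And>j. j < n \<Longrightarrow> v j \<ge> 0) \<Longrightarrow> j < n \<Longrightarrow> itr \<pi> P v \<theta> t j \<ge> 0"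
  by (induction t arbitrary: j) (auto intro!: sum_nonneg mult_nonneg_nonneg K_nn)

lemma tab_nn: "(\<And>j. j < n \<Longrightarrow> v j \<ge> 0) \<Longrightarrow> j < n \<Longrightarrow> tab \<pi> P i v \<theta> t j \<ge> 0"
  by (induction t arbitrary: j) (auto intro!: sum_nonneg mult_nonneg_nonneg K_nn)

lemma tab_mass: "i < n \<Longrightarrow> (\<Sum>t<M. tab \<pi> P i v \<theta> t i) + (\<Sum>j<n. tab \<pi> P i v \<theta> M j) = (\<Sum>j<n. v j)"
proof (induction M)
  case 0 then show ?case by simp
next
  case (Suc M)
  have "(\<Sum>j<n. tab \<pi> P i v \<theta> (Suc M) j) = (\<Sum>k<n. if k = i then 0 else tab \<pi> P i v \<theta> M k * (\<Sum>j<n. K \<theta> k j))"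
    unfolding tab.simps by (subst sum.swap) (auto simp: sum_distrib_left intro!: sum.cong)
  also have "\<dots> = (\<Sum>k<n. if k = i then 0 else tab \<pi> P i v \<theta> M k)"
    by (rule sum.cong) (auto simp: K_sum)
  also have "\<dots> = (\<Sum>k<n. tab \<pi> P i v \<theta> M k) - tab \<pi> P i v \<theta> M i"
    using Suc.prems by (simp add: sum.If_cases sum_diff1 Diff_eq[symmetric] lessThan_iff)
  finally show ?case using Suc by simp
qed

lemma taboo_nn: "i < n \<Longrightarrow> j < n \<Longrightarrow> taboo \<pi> P \<theta> i t j \<ge> 0"
  unfolding taboo_tab by (rule tab_nn) (auto simp: K_nn)

lemma taboo_partial: "i < n \<Longrightarrow> (\<Sum>t<M. taboo \<pi> P \<theta> i t i) \<le> 1"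
proof -
  assume i: "i < n"
  have "0 \<le> (\<Sum>j<n. tab \<pi> P i (K \<theta> i) \<theta> M j)" by (rule sum_nonneg) (simp add: tab_nn K_nn i)
  then show ?thesis using tab_mass[OF i, where M=M and v="K \<theta> i" and \<theta>=\<theta>] K_sum[OF i, of \<theta>]
    unfolding taboo_tab by linarith
qed

lemma taboo_summable: "i < n \<Longrightarrow> summable (\<lambda>t. taboo \<pi> P \<theta> i t i)"
proof (rule bounded_imp_summable)
  assume i: "i < n"
  show "\<And>t. 0 \<le> taboo \<pi> P \<theta> i t i" using taboo_nn i by simp
  fix t show "(\<Sum>k\<le>t. taboo \<pi> P \<theta> i k i) \<le> 1"
    using taboo_partial[OF i, where M="Suc t" and \<theta>=\<theta>] by (simp add: lessThan_Suc_atMost)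
qed

lemma U_bound:
  assumes i: "i < n" and tr: "return_prob \<pi> P \<theta> i < 1"
  shows "(\<Sum>m<M. itr \<pi> P (dl i) \<theta> m i) \<le> 1 / (1 - return_prob \<pi> P \<theta> i)"
proof -
  define F where "F = return_prob \<pi> P \<theta> i"
  define u where "u m = itr \<pi> P (dl i) \<theta> m i" for m
  define f where "f k = taboo \<pi> P \<theta> i k i" for k
  have fnn: "f k \<ge> 0" for k using taboo_nn i f_def by simp
  have unn: "u m \<ge> 0" for m unfolding u_def by (rule itr_nn) (auto simp: dl_def i)
  have u0: "u 0 = 1" by (simp add: u_def dl_def)
  have fsum: "(\<Sum>k<M. f k) \<le> F" for M
    unfolding F_def return_prob_def f_def
    by (rule sum_le_suminf) (use taboo_summable[OF i] taboo_nn[OF i i] in auto)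
  have uS: "u (Suc m) = (\<Sum>k\<le>m. f k * u (m - k))" for m
  proof -
    have "u (Suc m) = itr \<pi> P (K \<theta> i) \<theta> m i"
      unfolding u_def shift dl_row[OF i] ..
    also have "\<dots> = f m + (\<Sum>k<m. f k * u (m - k))"
      unfolding decomp[OF i, of "K \<theta> i" \<theta> m i] f_def u_def taboo_tab by simp
    also have "\<dots> = (\<Sum>k\<le>m. f k * u (m - k))"
      by (simp add: lessThan_Suc_atMost[symmetric] u0)
    finally show ?thesis .
  qed
  have Umono: "(\<Sum>d<a. u d) \<le> (\<Sum>d<b. u d)" if "a \<le> b" for a b
    by (rule sum_mono2) (use that unn in auto)
  have "(\<Sum>m<Suc M. u m) \<le> 1 / (1 - F)" for M
  proof -
    have "(\<Sum>m<Suc M. u m) = 1 + (\<Sum>m<M. \<Sum>k\<le>m. f k * u (m - k))"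
      by (simp only: sum.lessThan_Suc_shift u0 uS)
    also have "\<dots> = 1 + (\<Sum>k<M. f k * (\<Sum>d<M - k. u d))" by (simp add: conv_sum)
    also have "\<dots> \<le> 1 + (\<Sum>k<M. f k * (\<Sum>d<Suc M. u d))"
      by (intro add_left_mono sum_mono mult_left_mono Umono fnn) auto
    also have "\<dots> = 1 + (\<Sum>k<M. f k) * (\<Sum>d<Suc M. u d)" by (simp add: sum_distrib_right)
    also have "\<dots> \<le> 1 + F * (\<Sum>d<Suc M. u d)"
      by (intro add_left_mono mult_right_mono fsum sum_nonneg unn)
    finally have "(\<Sum>m<Suc M. u m) * (1 - F) \<le> 1" by (simp add: algebra_simps)
    then show ?thesis using tr F_def by (simp add: pos_le_divide_eq)
  qed
  moreover have "0 \<le> 1 / (1 - F)" using tr F_def by simp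
  ultimately show ?thesis unfolding u_def[symmetric] F_def[symmetric]
    by (cases M) auto
qed

lemma itr_bound:
  assumes i: "i < n" and tr: "return_prob \<pi> P \<theta> i < 1"
    and vnn: "\<And>j. j < n \<Longrightarrow> v j \<ge> 0" and vs1: "(\<Sum>j<n. v j) \<le> 1"
  shows "(\<Sum>m<M. itr \<pi> P v \<theta> m i) \<le> 1 + 1 / (1 - return_prob \<pi> P \<theta> i)"
proof -
  define B where "B = 1 / (1 - return_prob \<pi> P \<theta> i)"
  define u where "u m = itr \<pi> P (dl i) \<theta> m i" for m
  define a where "a k = tab \<pi> P i v \<theta> k i" for k
  have ann: "a k \<ge> 0" for k unfolding a_def by (rule tab_nn) (use vnn i in auto)
  have unn: "u m \<ge> 0" for m unfolding u_def by (rule itr_nn) (auto simp: dl_def i)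
  have asum: "(\<Sum>k<M. a k) \<le> 1" for M
  proof -
    have "0 \<le> (\<Sum>j<n. tab \<pi> P i v \<theta> M j)" by (rule sum_nonneg) (simp add: tab_nn vnn)
    then show ?thesis using tab_mass[OF i, where M=M and v=v and \<theta>=\<theta>] vs1 unfolding a_def by linarith
  qed
  have Ub: "(\<Sum>d<N. u d) \<le> B" for N unfolding u_def B_def by (rule U_bound[OF i tr])
  have "itr \<pi> P v \<theta> m i \<le> a m + (\<Sum>k\<le>m. a k * u (m - k))" for m
  proof -
    have "(\<Sum>k<m. a k * u (m - k)) \<le> (\<Sum>k\<le>m. a k * u (m - k))"
      by (rule sum_mono2) (auto intro: mult_nonneg_nonneg ann unn)
    then show ?thesis unfolding decomp[OF i, of v \<theta> m i] a_def u_def by simp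
  qed
  then have "(\<Sum>m<M. itr \<pi> P v \<theta> m i) \<le> (\<Sum>m<M. a m) + (\<Sum>m<M. \<Sum>k\<le>m. a k * u (m - k))"
    by (simp add: sum.distrib[symmetric] sum_mono)
  also have "(\<Sum>m<M. \<Sum>k\<le>m. a k * u (m - k)) = (\<Sum>k<M. a k * (\<Sum>d<M - k. u d))" by (rule conv_sum)
  also have "\<dots> \<le> (\<Sum>k<M. a k * B)" by (intro sum_mono mult_left_mono Ub ann)
  also have "\<dots> = (\<Sum>k<M. a k) * B" by (simp add: sum_distrib_right)
  also have "\<dots> \<le> 1 * B" by (intro mult_right_mono asum) (use Ub[of 0] in simp)
  finally show ?thesis using asum[of M] unfolding B_def by simp
qed

lemma alive_z_itr: "j < n \<Longrightarrow> \<not> absorbing P j \<Longrightarrow> alive \<pi> P z \<theta> t j = itr \<pi> P (init P) \<theta> t j"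
proof (induction t arbitrary: j)
  case 0 then show ?case by simp
next
  case (Suc t)
  show ?case unfolding alive.simps itr.simps
  proof (rule sum.cong)
    fix i assume i: "i \<in> {..<n}"
    show "(if absorbing P i then 0 else alive \<pi> P z \<theta> t i * (1 - z i \<theta>) * K \<theta> i j) =
          itr \<pi> P (init P) \<theta> t i * K \<theta> i j"
    proof (cases "absorbing P i")
      case True
      then have "i \<noteq> j" using Suc.prems by auto
      then show ?thesis using True abs_K[of i j \<theta>] i Suc.prems by simp
    next
      case False then show ?thesis using Suc.IH[of i] i by simp
    qed
  qed simp
qed

lemma alive_z_summable:
  assumes j: "j < n" "\<not> absorbing P j" and tr: "return_prob \<pi> P \<theta> j < 1"
  shows "summable (\<lambda>t. alive \<pi> P z \<theta> t j)"
proof (rule bounded_imp_summable)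
  show "\<And>t. 0 \<le> alive \<pi> P z \<theta> t j" using alive_nn[OF vs_z] j by simp
  fix t
  show "(\<Sum>k\<le>t. alive \<pi> P z \<theta> k j) \<le> 1 + 1 / (1 - return_prob \<pi> P \<theta> j)"
    using itr_bound[OF j(1) tr, of "init P" "Suc t"] init_nn init_sum alive_z_itr[OF j]
    by (simp add: lessThan_Suc_atMost)
qed

end



locale sprot = prot +
  assumes simp_P: "simple \<pi> P"
begin

lemma nonabs_tr: "j < n \<Longrightarrow> \<not> absorbing P j \<Longrightarrow> return_prob \<pi> P \<theta> j < 1"
  using simp_P by (auto simp: simple_def transient_def)

lemma b_summable: "summable (\<lambda>t. \<Sum>i<n. alive \<pi> P z \<theta> t i)"
proof -
  have "summable (\<lambda>t. \<Sum>i<n. if absorbing P i then 0 else alive \<pi> P z \<theta> t i)"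
  proof (rule summable_sum)
    fix i assume "i \<in> {..<n}"
    then show "summable (\<lambda>t. if absorbing P i then 0 else alive \<pi> P z \<theta> t i)"
      by (cases "absorbing P i") (auto intro!: alive_z_summable nonabs_tr)
  qed
  moreover have "(\<Sum>i<n. alive \<pi> P z \<theta> (Suc t) i) = (\<Sum>i<n. if absorbing P i then 0 else alive \<pi> P z \<theta> t i)" for t
    unfolding mass_step[OF vs_z] by (simp add: sum_subtractf[symmetric] ends_def) (auto intro!: sum.cong)
  ultimately show ?thesis by (subst summable_Suc_iff[symmetric]) simp
qed

lemma ends_w_nn: "vs \<rho> \<theta> \<Longrightarrow> (\<And>i. i < n \<Longrightarrow> 0 \<le> w i) \<Longrightarrow> 0 \<le> (\<Sum>i<n. ends \<pi> P \<rho> \<theta> t i * w i)"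
  by (rule sum_nonneg) (auto intro: mult_nonneg_nonneg ends_nn)

lemma ends_w_le: "vs \<rho> \<theta> \<Longrightarrow> (\<And>i. i < n \<Longrightarrow> 0 \<le> w i \<and> w i \<le> 1) \<Longrightarrow>
   (\<Sum>i<n. ends \<pi> P \<rho> \<theta> t i * w i) \<le> (\<Sum>i<n. alive \<pi> P z \<theta> t i)"
proof (rule sum_mono)
  fix i assume v: "vs \<rho> \<theta>" and w: "\<And>i. i < n \<Longrightarrow> 0 \<le> w i \<and> w i \<le> 1" and i: "i \<in> {..<n}"
  have "ends \<pi> P \<rho> \<theta> t i * w i \<le> ends \<pi> P \<rho> \<theta> t i"
    using w[of i] i ends_nn[OF v, of i t] by (auto intro: mult_left_le)
  also have "\<dots> \<le> alive \<pi> P \<rho> \<theta> t i" using ends_le[OF v] i by simp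
  also have "\<dots> \<le> alive \<pi> P z \<theta> t i" using alive_mono[OF v] i by simp
  finally show "ends \<pi> P \<rho> \<theta> t i * w i \<le> alive \<pi> P z \<theta> t i" .
qed

lemma ends_w_summable: "vs \<rho> \<theta> \<Longrightarrow> (\<And>i. i < n \<Longrightarrow> 0 \<le> w i \<and> w i \<le> 1) \<Longrightarrow>
   summable (\<lambda>t. \<Sum>i<n. ends \<pi> P \<rho> \<theta> t i * w i)"
  by (rule summable_comparison_test'[OF b_summable[of \<theta>], of 0]) (simp add: ends_w_nn ends_w_le)

lemma alive_lim: "vs \<rho> \<theta> \<Longrightarrow> j < n \<Longrightarrow> (\<lambda>t. alive \<pi> P \<rho> \<theta> t j) \<longlonglongrightarrow> 0"
proof (rule Lim_null_comparison)
  assume v: "vs \<rho> \<theta>" and j: "j < n"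
  show "\<forall>\<^sub>F t in sequentially. norm (alive \<pi> P \<rho> \<theta> t j) \<le> (\<Sum>i<n. alive \<pi> P z \<theta> t i)"
  proof (rule always_eventually, rule allI)
    fix t
    have "norm (alive \<pi> P \<rho> \<theta> t j) \<le> alive \<pi> P z \<theta> t j"
      using alive_nn[OF v j] alive_mono[OF v j] by simp
    also have "\<dots> \<le> (\<Sum>i<n. alive \<pi> P z \<theta> t i)"
      by (rule member_le_sum) (use j alive_nn[OF vs_z] in auto)
    finally show "norm (alive \<pi> P \<rho> \<theta> t j) \<le> (\<Sum>i<n. alive \<pi> P z \<theta> t i)" .
  qed
  show "(\<lambda>t. \<Sum>i<n. alive \<pi> P z \<theta> t i) \<longlonglongrightarrow> 0" by (rule summable_LIMSEQ_zero[OF b_summable])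
qed

lemma ends_sums1: "vs \<rho> \<theta> \<Longrightarrow> (\<lambda>t. \<Sum>i<n. ends \<pi> P \<rho> \<theta> t i) sums 1"
proof -
  assume v: "vs \<rho> \<theta>"
  have "(\<lambda>M. 1 - (\<Sum>i<n. alive \<pi> P \<rho> \<theta> M i)) \<longlonglongrightarrow> 1 - (\<Sum>i<n. 0)"
    by (intro tendsto_diff tendsto_const tendsto_sum alive_lim[OF v]) simp
  moreover have "(\<Sum>s<M. \<Sum>i<n. ends \<pi> P \<rho> \<theta> s i) = 1 - (\<Sum>i<n. alive \<pi> P \<rho> \<theta> M i)" for M
    using mass[OF v, of M] by simp
  ultimately show ?thesis unfolding sums_def by simp
qed

lemma act_w: "i < n \<Longrightarrow> 0 \<le> act P i \<and> act P i \<le> 1" using act_nn act_le1 by simp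
lemma act_w': "i < n \<Longrightarrow> 0 \<le> 1 - act P i \<and> 1 - act P i \<le> 1" using act_nn act_le1 by simp

lemma probL: "vs \<rho> \<theta> \<Longrightarrow> prob_actL \<pi> P \<rho> \<theta> = 1 - prob_actH \<pi> P \<rho> \<theta>"
proof -
  assume v: "vs \<rho> \<theta>"
  have "prob_actL \<pi> P \<rho> \<theta> = (\<Sum>t. (\<Sum>i<n. ends \<pi> P \<rho> \<theta> t i) - (\<Sum>i<n. ends \<pi> P \<rho> \<theta> t i * act P i))"
    unfolding prob_actL_def by (simp add: algebra_simps sum_subtractf)
  also have "\<dots> = (\<Sum>t. \<Sum>i<n. ends \<pi> P \<rho> \<theta> t i) - prob_actH \<pi> P \<rho> \<theta>"
    unfolding prob_actH_def
    by (rule suminf_diff[symmetric]) (use sums_summable[OF ends_sums1[OF v]] ends_w_summable[OF v act_w] in auto)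
  also have "(\<Sum>t. \<Sum>i<n. ends \<pi> P \<rho> \<theta> t i) = 1" using ends_sums1[OF v] by (simp add: sums_iff)
  finally show ?thesis .
qed

lemma probH_summable: "vs \<rho> \<theta> \<Longrightarrow> summable (\<lambda>t. \<Sum>i<n. ends \<pi> P \<rho> \<theta> t i * act P i)"
  using ends_w_summable act_w by blast

lemma valid_vs: "valid_strategy P \<sigma> \<Longrightarrow> vs \<sigma> \<theta>"
  by (simp add: valid_strategy_def vs_def)

lemma coord_cont: "continuous_on UNIV (\<lambda>\<sigma>::nat \<Rightarrow> theta \<Rightarrow> real. \<sigma> i \<theta>)"
  by (rule continuous_on_product_then_coordinatewise) simp

lemma alive_cont: "continuous_on UNIV (\<lambda>\<sigma>. alive \<pi> P \<sigma> \<theta> t j)"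
proof (induction t arbitrary: j)
  case 0 then show ?case by simp
next
  case (Suc t)
  show ?case unfolding alive.simps
  proof (rule continuous_on_sum)
    fix i
    show "continuous_on UNIV (\<lambda>\<sigma>. if absorbing P i then 0 else alive \<pi> P \<sigma> \<theta> t i * (1 - \<sigma> i \<theta>) * K \<theta> i j)"
      by (cases "absorbing P i") (auto intro!: continuous_intros Suc.IH coord_cont)
  qed
qed

lemma ends_cont: "continuous_on UNIV (\<lambda>\<sigma>. \<Sum>i<n. ends \<pi> P \<sigma> \<theta> t i * act P i)"
proof (rule continuous_on_sum)
  fix i
  show "continuous_on UNIV (\<lambda>\<sigma>. ends \<pi> P \<sigma> \<theta> t i * act P i)"
    unfolding ends_def
    by (cases "absorbing P i") (auto intro!: continuous_intros alive_cont coord_cont)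
qed

definition SS :: "(nat \<Rightarrow> theta \<Rightarrow> real) set" where
  "SS = {\<sigma>. \<forall>i \<theta>. \<sigma> i \<theta> \<in> {0..1}}"

lemma SS_compact: "compact SS"
proof -
  have c1: "compact (PiE UNIV (\<lambda>_::theta. {0..1::real}))"
    using compactin_PiE[of "\<lambda>_. euclidean" UNIV "\<lambda>_::theta. {0..1::real}"]
    by (simp add: euclidean_product_topology)
  have "compact (PiE UNIV (\<lambda>_::nat. PiE UNIV (\<lambda>_::theta. {0..1::real})))"
    using compactin_PiE[of "\<lambda>_. euclidean" UNIV "\<lambda>_::nat. PiE UNIV (\<lambda>_::theta. {0..1::real})"] c1
    by (simp add: euclidean_product_topology)
  moreover have "PiE UNIV (\<lambda>_::nat. PiE UNIV (\<lambda>_::theta. {0..1::real})) = SS"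
    by (auto simp: SS_def PiE_iff)
  ultimately show ?thesis by simp
qed

lemma SS_vs: "\<sigma> \<in> SS \<Longrightarrow> vs \<sigma> \<theta>" by (simp add: SS_def vs_def)

lemma probH_cont: "continuous_on SS (\<lambda>\<sigma>. prob_actH \<pi> P \<sigma> \<theta>)"
proof -
  have "uniform_limit SS (\<lambda>N \<sigma>. \<Sum>t<N. \<Sum>i<n. ends \<pi> P \<sigma> \<theta> t i * act P i)
          (\<lambda>\<sigma>. \<Sum>t. \<Sum>i<n. ends \<pi> P \<sigma> \<theta> t i * act P i) sequentially"
  proof (rule Weierstrass_m_test[OF _ b_summable])
    fix t \<sigma> assume "\<sigma> \<in> SS"
    then have v: "vs \<sigma> \<theta>" by (rule SS_vs)
    show "norm (\<Sum>i<n. ends \<pi> P \<sigma> \<theta> t i * act P i) \<le> (\<Sum>i<n. alive \<pi> P z \<theta> t i)"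
      using ends_w_nn[OF v, of "act P" t] ends_w_le[OF v act_w, where t=t] act_w by simp
  qed
  then show ?thesis unfolding prob_actH_def
    by (rule uniform_limit_theorem[rotated])
       (auto intro!: always_eventually continuous_on_sum continuous_on_subset[OF ends_cont])
qed

lemma br_ne: "\<exists>\<sigma>. \<sigma> \<in> br p \<pi> P"
proof -
  have cont: "continuous_on SS (US p \<pi> P)"
    unfolding US_def[abs_def] by (intro continuous_intros probH_cont)
  have "SS \<noteq> {}" by (auto simp: SS_def intro!: exI[of _ z])
  then obtain \<sigma> where s: "\<sigma> \<in> SS" and mx: "\<And>\<sigma>'. \<sigma>' \<in> SS \<Longrightarrow> US p \<pi> P \<sigma>' \<le> US p \<pi> P \<sigma>"
    using continuous_attains_sup[OF SS_compact _ cont] by blast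
  have "\<sigma> \<in> br p \<pi> P"
    unfolding br_def
  proof (intro CollectI conjI allI impI)
    show "valid_strategy P \<sigma>" using s by (simp add: SS_def valid_strategy_def)
    fix \<sigma>' assume v: "valid_strategy P \<sigma>'"
    define c where "c = (\<lambda>i \<theta>. if i < n then \<sigma>' i \<theta> else 0)"
    have "c \<in> SS" using v by (auto simp: c_def SS_def valid_strategy_def)
    moreover have "US p \<pi> P \<sigma>' = US p \<pi> P c"
      unfolding US_def using probH_cong[of \<sigma>' _ c] by (simp add: c_def)
    ultimately show "US p \<pi> P \<sigma>' \<le> US p \<pi> P \<sigma>" using mx by simp
  qed
  then show ?thesis by blast
qed

end



definition mk :: "'s protocol \<Rightarrow> nat \<Rightarrow> nat \<Rightarrow> (nat \<Rightarrow> real) \<Rightarrow> 's protocol" where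
  "mk P h l c = P\<lparr>trans := (\<lambda>i s j. if i = h \<or> i = l then trans P i s j
       else if j = h then c i * act P i + (1 - c i) * (trans P i s h * act P h + trans P i s l * act P l)
       else if j = l then c i * (1 - act P i) + (1 - c i) * (trans P i s h * (1 - act P h) + trans P i s l * (1 - act P l))
       else (1 - c i) * trans P i s j),
     init := (\<lambda>j. if j = h then init P h * act P h + init P l * act P l
       else if j = l then init P h * (1 - act P h) + init P l * (1 - act P l) else init P j),
     act := (\<lambda>j. if j = h then 1 else 0)\<rparr>"

lemma mk_simps:
  "nst (mk P h l c) = nst P"
  "act (mk P h l c) j = (if j = h then 1 else 0)"
  by (simp_all add: mk_def)

locale constr = sprot +
  fixes h l :: nat and c :: "nat \<Rightarrow> real"
  assumes h: "h < n" and l: "l < n" and hl: "h \<noteq> l"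
    and absset: "{i. i < n \<and> absorbing P i} = {h, l}"
    and c0: "\<And>i. 0 \<le> c i" and c1: "\<And>i. c i \<le> 1"
begin

abbreviation "Q \<equiv> mk P h l c"

lemma abs_iff: "i < n \<Longrightarrow> absorbing P i \<longleftrightarrow> i = h \<or> i = l"
  using absset by blast

lemma trQ_abs: "i = h \<or> i = l \<Longrightarrow> trans Q i s j = trans P i s j"
  by (auto simp: mk_def)

lemma trQ_o: "i \<noteq> h \<Longrightarrow> i \<noteq> l \<Longrightarrow> j \<noteq> h \<Longrightarrow> j \<noteq> l \<Longrightarrow> trans Q i s j = (1 - c i) * trans P i s j"
  by (auto simp: mk_def)

lemma trQ_h: "i \<noteq> h \<Longrightarrow> i \<noteq> l \<Longrightarrow>
   trans Q i s h = c i * act P i + (1 - c i) * (trans P i s h * act P h + trans P i s l * act P l)"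
  by (auto simp: mk_def)

lemma trQ_l: "i \<noteq> h \<Longrightarrow> i \<noteq> l \<Longrightarrow>
   trans Q i s l = c i * (1 - act P i) + (1 - c i) * (trans P i s h * (1 - act P h) + trans P i s l * (1 - act P l))"
  using hl by (auto simp: mk_def)

lemma initQ: "init Q j = (if j = h then init P h * act P h + init P l * act P l
       else if j = l then init P h * (1 - act P h) + init P l * (1 - act P l) else init P j)"
  by (simp add: mk_def)

lemma sum_hl: "(\<Sum>i<n. if i = h \<or> i = l then g i else 0) = g h + g l"
proof -
  have "(\<Sum>i<n. if i = h \<or> i = l then g i else 0) = (\<Sum>i<n. if i \<in> {h, l} then g i else 0)" by simp
  also have "\<dots> = sum g ({..<n} \<inter> {h, l})" by (rule sum.inter_restrict[symmetric]) simp
  also have "{..<n} \<inter> {h, l} = {h, l}" using h l by auto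
  finally show ?thesis using hl by simp
qed

lemma sum_split_hl: "(\<Sum>j<n. g j) = g h + g l + (\<Sum>j<n. if j = h \<or> j = l then 0 else g j)"
proof -
  have "(\<Sum>j<n. g j) = (\<Sum>j<n. (if j = h \<or> j = l then g j else 0) + (if j = h \<or> j = l then 0 else g j))"
    by (rule sum.cong) auto
  then show ?thesis by (simp add: sum.distrib sum_hl)
qed

lemma trQ_nn: "i < n \<Longrightarrow> j < n \<Longrightarrow> 0 \<le> trans Q i s j"
proof (cases "i = h \<or> i = l")
  case True then show "i < n \<Longrightarrow> j < n \<Longrightarrow> 0 \<le> trans Q i s j" using trQ_abs trans_nn by simp
next
  case False
  assume i: "i < n" and j: "j < n"
  have ne: "i \<noteq> h" "i \<noteq> l" using False by auto
  have a: "0 \<le> c i" "0 \<le> 1 - c i" using c0 c1 by (auto simp: algebra_simps)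
  have b: "0 \<le> act P i" "0 \<le> 1 - act P i" "0 \<le> act P h" "0 \<le> 1 - act P h" "0 \<le> act P l" "0 \<le> 1 - act P l"
    using act_nn act_le1 i h l by (auto simp: algebra_simps)
  have t: "0 \<le> trans P i s h" "0 \<le> trans P i s l" "0 \<le> trans P i s j" using trans_nn i h l j by auto
  consider "j = h" | "j = l" | "j \<noteq> h" "j \<noteq> l" by blast
  then show ?thesis
  proof cases
    case 1 then show ?thesis using trQ_h[OF ne] a b t by (simp add: add_nonneg_nonneg mult_nonneg_nonneg)
  next
    case 2 then show ?thesis using trQ_l[OF ne] a b t by (simp add: add_nonneg_nonneg mult_nonneg_nonneg)
  next
    case 3 then show ?thesis using trQ_o[OF ne 3] a t by (simp add: mult_nonneg_nonneg)
  qed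
qed

lemma trQ_sum: "i < n \<Longrightarrow> (\<Sum>j<n. trans Q i s j) = 1"
proof (cases "i = h \<or> i = l")
  case True then show "i < n \<Longrightarrow> ?thesis" using trQ_abs trans_sum by simp
next
  case False
  assume i: "i < n"
  have ne: "i \<noteq> h" "i \<noteq> l" using False by auto
  have "(\<Sum>j<n. trans Q i s j) = trans Q i s h + trans Q i s l + (\<Sum>j<n. if j = h \<or> j = l then 0 else trans Q i s j)"
    by (rule sum_split_hl)
  also have "(\<Sum>j<n. if j = h \<or> j = l then 0 else trans Q i s j) = (\<Sum>j<n. (1 - c i) * (if j = h \<or> j = l then 0 else trans P i s j))"
    by (rule sum.cong) (auto simp: trQ_o[OF ne])
  also have "\<dots> = (1 - c i) * (\<Sum>j<n. if j = h \<or> j = l then 0 else trans P i s j)"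
    by (rule sum_distrib_left[symmetric])
  also have "(\<Sum>j<n. if j = h \<or> j = l then 0 else trans P i s j) = 1 - trans P i s h - trans P i s l"
    using sum_split_hl[of "trans P i s"] trans_sum[OF i, of s] by linarith
  finally show ?thesis unfolding trQ_h[OF ne] trQ_l[OF ne] by (simp add: algebra_simps)
qed

lemma Q_valid: "valid_protocol Q"
  unfolding valid_protocol_def mk_simps
proof (intro conjI allI impI)
  show "1 \<le> n" by (rule n_pos)
  fix i s assume i: "i < n"
  show "\<And>j. j < n \<Longrightarrow> 0 \<le> trans Q i s j" using trQ_nn i by simp
  show "(\<Sum>j<n. trans Q i s j) = 1" using trQ_sum i by simp
next
  fix j assume j: "j < n"
  have b: "0 \<le> act P h" "0 \<le> 1 - act P h" "0 \<le> act P l" "0 \<le> 1 - act P l"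
    using act_nn act_le1 h l by (auto simp: algebra_simps)
  have t: "0 \<le> init P h" "0 \<le> init P l" "0 \<le> init P j" using init_nn h l j by auto
  show "0 \<le> init Q j" unfolding initQ using b t
    by (simp add: add_nonneg_nonneg mult_nonneg_nonneg)
next
  have "(\<Sum>j<n. init Q j) = init Q h + init Q l + (\<Sum>j<n. if j = h \<or> j = l then 0 else init Q j)"
    by (rule sum_split_hl)
  also have "(\<Sum>j<n. if j = h \<or> j = l then 0 else init Q j) = (\<Sum>j<n. if j = h \<or> j = l then 0 else init P j)"
    by (rule sum.cong) (auto simp: initQ)
  also have "\<dots> = 1 - init P h - init P l"
    using sum_split_hl[of "init P"] init_sum by linarith
  finally show "(\<Sum>j<n. init Q j) = 1" using hl unfolding initQ by (simp add: algebra_simps)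
next
  fix i show "0 \<le> (if i = h then 1 else 0::real)" "(if i = h then 1 else 0::real) \<le> 1" by auto
qed

lemma Q_prot: "prot \<pi> Q" by (unfold_locales) (auto simp: pi_nn pi_sum Q_valid)

lemma KQ_abs: "i = h \<or> i = l \<Longrightarrow> kernel \<pi> Q \<theta> i j = K \<theta> i j"
  by (simp add: kernel_def trQ_abs)

lemma KQ_o: "i \<noteq> h \<Longrightarrow> i \<noteq> l \<Longrightarrow> j \<noteq> h \<Longrightarrow> j \<noteq> l \<Longrightarrow> kernel \<pi> Q \<theta> i j = (1 - c i) * K \<theta> i j"
  by (simp add: kernel_def trQ_o sum_distrib_left algebra_simps)

lemma lin3: "(\<Sum>s\<in>UNIV. \<pi> \<theta> s * (A + B * (x s * C + y s * D))) =
    A + B * ((\<Sum>s\<in>UNIV. \<pi> \<theta> s * x s) * C + (\<Sum>s\<in>UNIV. \<pi> \<theta> s * y s) * D)"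
proof -
  have "(\<Sum>s\<in>UNIV. \<pi> \<theta> s * (A + B * (x s * C + y s * D))) =
     (\<Sum>s\<in>UNIV. A * \<pi> \<theta> s + (B * C) * (\<pi> \<theta> s * x s) + (B * D) * (\<pi> \<theta> s * y s))"
    by (rule sum.cong) (simp_all add: algebra_simps)
  also have "\<dots> = A * (\<Sum>s\<in>UNIV. \<pi> \<theta> s) + (B * C) * (\<Sum>s\<in>UNIV. \<pi> \<theta> s * x s) + (B * D) * (\<Sum>s\<in>UNIV. \<pi> \<theta> s * y s)"
    by (simp only: sum.distrib sum_distrib_left)
  finally show ?thesis by (simp add: pi_sum algebra_simps)
qed

lemma KQ_h: "i \<noteq> h \<Longrightarrow> i \<noteq> l \<Longrightarrow>
   kernel \<pi> Q \<theta> i h = c i * act P i + (1 - c i) * (K \<theta> i h * act P h + K \<theta> i l * act P l)"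
proof -
  assume ne: "i \<noteq> h" "i \<noteq> l"
  show ?thesis unfolding kernel_def trQ_h[OF ne] by (rule lin3)
qed

lemma KQ_l: "i \<noteq> h \<Longrightarrow> i \<noteq> l \<Longrightarrow>
   kernel \<pi> Q \<theta> i l = c i * (1 - act P i) + (1 - c i) * (K \<theta> i h * (1 - act P h) + K \<theta> i l * (1 - act P l))"
proof -
  assume ne: "i \<noteq> h" "i \<noteq> l"
  show ?thesis unfolding kernel_def trQ_l[OF ne] by (rule lin3)
qed

lemma absQ_iff: "i < n \<Longrightarrow> absorbing Q i \<longleftrightarrow> absorbing P i"
proof
  assume i: "i < n"
  show "absorbing P i \<Longrightarrow> absorbing Q i"
    using i abs_iff trQ_abs by (auto simp: absorbing_def)
  assume aQ: "absorbing Q i"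
  show "absorbing P i"
  proof (rule ccontr)
    assume na: "\<not> absorbing P i"
    then have ne: "i \<noteq> h" "i \<noteq> l" using abs_iff i h l absset by auto
    from na obtain s where s: "trans P i s i \<noteq> 1" by (auto simp: absorbing_def)
    have "trans Q i s i = (1 - c i) * trans P i s i" using ne by (simp add: trQ_o)
    moreover have "trans Q i s i = 1" using aQ by (simp add: absorbing_def)
    ultimately have "(1 - c i) * trans P i s i = 1" by simp
    moreover have "0 \<le> trans P i s i" "trans P i s i \<le> 1" using trans_nn trans_le1 i by auto
    moreover have "0 \<le> 1 - c i" "1 - c i \<le> 1" using c0 c1 by (auto simp: algebra_simps)
    ultimately have "trans P i s i = 1"
      using mult_left_le_one_le[of "trans P i s i" "1 - c i"] by linarith
    with s show False by simp
  qed
qed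

lemma tabooQ:
  assumes i: "i < n" "\<not> absorbing P i"
  shows "j < n \<Longrightarrow> 0 \<le> taboo \<pi> Q \<theta> i t j \<and> (\<not> absorbing P j \<longrightarrow> taboo \<pi> Q \<theta> i t j \<le> taboo \<pi> P \<theta> i t j)"
proof (induction t arbitrary: j)
  case 0
  have ne: "i \<noteq> h" "i \<noteq> l" using abs_iff i by auto
  have "0 \<le> kernel \<pi> Q \<theta> i j" using prot.K_nn[OF Q_prot] i 0 by (simp add: mk_simps)
  moreover have "\<not> absorbing P j \<Longrightarrow> kernel \<pi> Q \<theta> i j \<le> K \<theta> i j"
  proof -
    assume "\<not> absorbing P j"
    then have "j \<noteq> h" "j \<noteq> l" using abs_iff 0 by auto
    then show ?thesis using KQ_o ne K_nn[of i j \<theta>] i 0 c0[of i] mult_left_le_one_le[of "K \<theta> i j" "1 - c i"] c1[of i] by simp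
  qed
  ultimately show ?case by simp
next
  case (Suc t)
  have KQnn: "k < n \<Longrightarrow> 0 \<le> kernel \<pi> Q \<theta> k j" for k using prot.K_nn[OF Q_prot] Suc.prems by (simp add: mk_simps)
  have "0 \<le> taboo \<pi> Q \<theta> i (Suc t) j"
    unfolding taboo.simps mk_simps
  proof (rule sum_nonneg)
    fix k assume k: "k \<in> {..<n}"
    then have "0 \<le> taboo \<pi> Q \<theta> i t k" using Suc.IH[of k] by simp
    then show "0 \<le> (if k = i then 0 else taboo \<pi> Q \<theta> i t k * kernel \<pi> Q \<theta> k j)"
      using KQnn[of k] k by simp
  qed
  moreover have "taboo \<pi> Q \<theta> i (Suc t) j \<le> taboo \<pi> P \<theta> i (Suc t) j" if nj: "\<not> absorbing P j"
    unfolding taboo.simps mk_simps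
  proof (rule sum_mono)
    fix k assume k: "k \<in> {..<n}"
    have nej: "j \<noteq> h" "j \<noteq> l" using abs_iff nj Suc.prems by auto
    show "(if k = i then 0 else taboo \<pi> Q \<theta> i t k * kernel \<pi> Q \<theta> k j) \<le>
          (if k = i then 0 else taboo \<pi> P \<theta> i t k * K \<theta> k j)"
    proof (cases "k = h \<or> k = l")
      case True
      then have "absorbing P k" using abs_iff k by auto
      moreover have "k \<noteq> j" using True nej by auto
      ultimately have "K \<theta> k j = 0" using abs_K k Suc.prems by simp
      then show ?thesis using KQ_abs[OF True] by simp
    next
      case False
      then have nk: "\<not> absorbing P k" using abs_iff k by auto
      have "taboo \<pi> Q \<theta> i t k * kernel \<pi> Q \<theta> k j = taboo \<pi> Q \<theta> i t k * ((1 - c k) * K \<theta> k j)"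
        using False nej by (simp add: KQ_o)
      also have "\<dots> \<le> taboo \<pi> P \<theta> i t k * K \<theta> k j"
      proof -
        have a: "0 \<le> taboo \<pi> Q \<theta> i t k" "taboo \<pi> Q \<theta> i t k \<le> taboo \<pi> P \<theta> i t k"
          using Suc.IH[of k] k nk by auto
        have b: "0 \<le> K \<theta> k j" using K_nn k Suc.prems by simp
        have "(1 - c k) * K \<theta> k j \<le> K \<theta> k j" using b c0[of k] c1[of k] mult_left_le_one_le[of "K \<theta> k j" "1 - c k"] by simp
        moreover have "0 \<le> (1 - c k) * K \<theta> k j" using b c1[of k] by simp
        ultimately show ?thesis using a b by (meson mult_mono order_trans)
      qed
      finally show ?thesis by simp
    qed
  qed
  ultimately show ?case by simp
qed

lemma Q_transient: "i < n \<Longrightarrow> \<not> absorbing P i \<Longrightarrow> return_prob \<pi> Q \<theta> i < 1"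
proof -
  assume i: "i < n" "\<not> absorbing P i"
  have le: "taboo \<pi> Q \<theta> i t i \<le> taboo \<pi> P \<theta> i t i" "0 \<le> taboo \<pi> Q \<theta> i t i" for t
    using tabooQ[OF i, of i] i by auto
  have sQ: "summable (\<lambda>t. taboo \<pi> Q \<theta> i t i)"
    by (rule summable_comparison_test'[OF taboo_summable[OF i(1)], of 0]) (use le in auto)
  have "return_prob \<pi> Q \<theta> i \<le> return_prob \<pi> P \<theta> i"
    unfolding return_prob_def by (rule suminf_le[OF _ sQ taboo_summable[OF i(1)]]) (use le in auto)
  also have "\<dots> < 1" using nonabs_tr i by simp
  finally show ?thesis .
qed

lemma absQset: "{i. i < nst Q \<and> absorbing Q i} = {h, l}"
  using absset absQ_iff by (auto simp: mk_simps)

lemma Q_simple: "simple \<pi> Q"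
  unfolding simple_def
proof (intro conjI allI impI)
  show "card {i. i < nst Q \<and> absorbing Q i} = 2" using absQset hl by simp
  fix i \<theta> assume "i < nst Q" "\<not> absorbing Q i"
  then show "transient \<pi> Q \<theta> i" using Q_transient absQ_iff by (simp add: transient_def mk_simps)
qed

lemma Q_pars: "parsimonious \<pi> Q"
  unfolding parsimonious_def
proof (intro exI conjI allI impI)
  show "h < nst Q" "l < nst Q" "h \<noteq> l" using h l hl by (auto simp: mk_simps)
  show "{i. i < nst Q \<and> absorbing Q i} = {h, l}" by (rule absQset)
  show "act Q h = 1" "act Q l = 0" using hl by (auto simp: mk_simps)
  fix i assume i: "i < nst Q" and ne: "i \<noteq> h \<and> i \<noteq> l"
  show "act Q i = 0" using ne by (simp add: mk_simps)
  fix \<theta>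
  have "\<not> absorbing P i" using ne abs_iff i by (auto simp: mk_simps)
  then show "transient \<pi> Q \<theta> i" using Q_transient i by (simp add: transient_def mk_simps)
qed

lemma Q_sprot: "sprot \<pi> Q"
  unfolding sprot_def sprot_axioms_def using Q_prot Q_simple by simp

end



context sprot
begin

lemma sep:
  assumes br: "\<sigma> \<in> br p \<pi> P" and p: "0 < p" "p < 1" and v: "vs \<rho> \<theta>"
  shows "prob_actH \<pi> P \<rho> \<theta> \<le> prob_actH \<pi> P \<sigma> \<theta>"
proof -
  define \<sigma>' where "\<sigma>' = (\<lambda>i \<theta>'. if \<theta>' = \<theta> then \<rho> i \<theta>' else \<sigma> i \<theta>')"
  have vsig: "valid_strategy P \<sigma>" using br by (simp add: br_def)
  have "valid_strategy P \<sigma>'" using vsig v by (auto simp: valid_strategy_def vs_def \<sigma>'_def)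
  then have le: "US p \<pi> P \<sigma>' \<le> US p \<pi> P \<sigma>" using br by (simp add: br_def)
  have e1: "prob_actH \<pi> P \<sigma>' \<theta> = prob_actH \<pi> P \<rho> \<theta>" by (rule probH_cong) (simp add: \<sigma>'_def)
  have e2: "\<theta>' \<noteq> \<theta> \<Longrightarrow> prob_actH \<pi> P \<sigma>' \<theta>' = prob_actH \<pi> P \<sigma> \<theta>'" for \<theta>'
    by (rule probH_cong) (simp add: \<sigma>'_def)
  show ?thesis
  proof (cases \<theta>)
    case H
    then have "p * prob_actH \<pi> P \<rho> \<theta> \<le> p * prob_actH \<pi> P \<sigma> \<theta>"
      using le e1 e2[of L] by (simp add: US_def)
    then show ?thesis using p by simp
  next
    case L
    then have "(1 - p) * prob_actH \<pi> P \<rho> \<theta> \<le> (1 - p) * prob_actH \<pi> P \<sigma> \<theta>"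
      using le e1 e2[of H] by (simp add: US_def)
    then show ?thesis using p by simp
  qed
qed

end

context constr
begin

lemma aliveQ:
  assumes rel: "\<And>i. i < n \<Longrightarrow> \<not> absorbing P i \<Longrightarrow> 1 - \<rho> i \<theta> = (1 - \<tau> i \<theta>) * (1 - c i)"
  shows "j < n \<Longrightarrow> \<not> absorbing P j \<Longrightarrow> alive \<pi> Q \<tau> \<theta> t j = alive \<pi> P \<rho> \<theta> t j"
proof (induction t arbitrary: j)
  case 0
  then have "j \<noteq> h" "j \<noteq> l" using abs_iff by auto
  then show ?case by (simp add: initQ)
next
  case (Suc t)
  have nej: "j \<noteq> h" "j \<noteq> l" using abs_iff Suc.prems by auto
  show ?case unfolding alive.simps mk_simps
  proof (rule sum.cong[OF refl])
    fix i assume i: "i \<in> {..<n}"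
    show "(if absorbing Q i then 0 else alive \<pi> Q \<tau> \<theta> t i * (1 - \<tau> i \<theta>) * kernel \<pi> Q \<theta> i j) =
          (if absorbing P i then 0 else alive \<pi> P \<rho> \<theta> t i * (1 - \<rho> i \<theta>) * K \<theta> i j)"
    proof (cases "absorbing P i")
      case True then show ?thesis using absQ_iff i by simp
    next
      case False
      then have nei: "i \<noteq> h" "i \<noteq> l" using abs_iff i by auto
      show ?thesis using False absQ_iff[of i] i Suc.IH[of i] KQ_o[OF nei nej] rel[of i] by simp
    qed
  qed
qed

lemma core:
  assumes v: "vs \<rho> \<theta>" and vt: "\<And>i. i < n \<Longrightarrow> 0 \<le> \<tau> i \<theta> \<and> \<tau> i \<theta> \<le> 1"
    and rel: "\<And>i. i < n \<Longrightarrow> \<not> absorbing P i \<Longrightarrow> 1 - \<rho> i \<theta> = (1 - \<tau> i \<theta>) * (1 - c i)"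
  shows "prob_actH \<pi> Q \<tau> \<theta> = prob_actH \<pi> P \<rho> \<theta>
     - (\<Sum>t. \<Sum>i<n. if absorbing P i then 0 else alive \<pi> P \<rho> \<theta> t i * \<rho> i \<theta> * act P i)
     + (\<Sum>t. \<Sum>i<n. if absorbing P i then 0 else alive \<pi> P \<rho> \<theta> t i * ((1 - \<tau> i \<theta>) * c i) * act P i)"
    and "(\<Sum>t. \<Sum>i<n. if absorbing P i then 0 else alive \<pi> P \<rho> \<theta> t i * ((1 - \<tau> i \<theta>) * c i) * act P i)
       \<le> (\<Sum>t. \<Sum>i<n. if absorbing P i then 0 else alive \<pi> P \<rho> \<theta> t i * \<rho> i \<theta> * act P i)"
proof -
  define a where "a = act P"
  define Y where "Y t = alive \<pi> P \<rho> \<theta> t h * a h + alive \<pi> P \<rho> \<theta> t l * a l" for t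
  define X where "X t = (\<Sum>i<n. if absorbing P i then 0 else alive \<pi> P \<rho> \<theta> t i * \<rho> i \<theta> * a i)" for t
  define X' where "X' t = (\<Sum>i<n. if absorbing P i then 0 else alive \<pi> P \<rho> \<theta> t i * ((1 - \<tau> i \<theta>) * c i) * a i)" for t
  define T where "T t = (\<Sum>i<n. ends \<pi> P \<rho> \<theta> t i * a i)" for t
  define T' where "T' t = (\<Sum>i<nst Q. ends \<pi> Q \<tau> \<theta> t i * act Q i)" for t
  have an: "i < n \<Longrightarrow> 0 \<le> a i" for i using act_nn a_def by simp
  have aln: "i < n \<Longrightarrow> 0 \<le> alive \<pi> P \<rho> \<theta> t i" for i t using alive_nn[OF v] by simp
  have absQh: "absorbing Q h" "absorbing Q l" using absQ_iff abs_iff h l by auto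
  have T_eq: "T t = X t + Y t" for t
  proof -
    have "T t = (\<Sum>i<n. (if i = h \<or> i = l then alive \<pi> P \<rho> \<theta> t i * a i else 0) +
                 (if absorbing P i then 0 else alive \<pi> P \<rho> \<theta> t i * \<rho> i \<theta> * a i))"
      unfolding T_def by (rule sum.cong) (auto simp: ends_def abs_iff)
    then show ?thesis by (simp add: sum.distrib sum_hl X_def Y_def)
  qed
  have T'_eq: "T' t = alive \<pi> Q \<tau> \<theta> t h" for t
  proof -
    have "T' t = (\<Sum>i<n. if i = h then ends \<pi> Q \<tau> \<theta> t i else 0)"
      unfolding T'_def mk_simps by (rule sum.cong) auto
    also have "\<dots> = ends \<pi> Q \<tau> \<theta> t h" using h by (simp add: sum.delta)
    finally show ?thesis using absQh by (simp add: ends_def)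
  qed
  have T'0: "T' 0 = Y 0" unfolding T'_eq Y_def by (simp add: initQ a_def)
  have T'S: "T' (Suc t) = X' t + Y (Suc t)" for t
  proof -
    have "T' (Suc t) = (\<Sum>i<n. if absorbing P i then 0 else alive \<pi> P \<rho> \<theta> t i * (1 - \<tau> i \<theta>) *
        (c i * a i + (1 - c i) * (K \<theta> i h * a h + K \<theta> i l * a l)))"
      unfolding T'_eq alive.simps mk_simps
    proof (rule sum.cong[OF refl])
      fix i assume i: "i \<in> {..<n}"
      show "(if absorbing Q i then 0 else alive \<pi> Q \<tau> \<theta> t i * (1 - \<tau> i \<theta>) * kernel \<pi> Q \<theta> i h) =
        (if absorbing P i then 0 else alive \<pi> P \<rho> \<theta> t i * (1 - \<tau> i \<theta>) *
        (c i * a i + (1 - c i) * (K \<theta> i h * a h + K \<theta> i l * a l)))"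
      proof (cases "absorbing P i")
        case True then show ?thesis using absQ_iff i by simp
      next
        case False
        then have nei: "i \<noteq> h" "i \<noteq> l" using abs_iff i by auto
        show ?thesis using False absQ_iff[of i] i aliveQ[where \<rho>=\<rho> and \<tau>=\<tau> and \<theta>=\<theta>, OF rel, of i t] KQ_h[OF nei] by (simp add: a_def)
      qed
    qed
    also have "\<dots> = (\<Sum>i<n. (if absorbing P i then 0 else alive \<pi> P \<rho> \<theta> t i * ((1 - \<tau> i \<theta>) * c i) * a i) +
        (if absorbing P i then 0 else alive \<pi> P \<rho> \<theta> t i * (1 - \<rho> i \<theta>) * K \<theta> i h * a h) +
        (if absorbing P i then 0 else alive \<pi> P \<rho> \<theta> t i * (1 - \<rho> i \<theta>) * K \<theta> i l * a l))"
    proof (rule sum.cong[OF refl])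
      fix i assume i: "i \<in> {..<n}"
      show "(if absorbing P i then 0 else alive \<pi> P \<rho> \<theta> t i * (1 - \<tau> i \<theta>) *
        (c i * a i + (1 - c i) * (K \<theta> i h * a h + K \<theta> i l * a l))) =
        (if absorbing P i then 0 else alive \<pi> P \<rho> \<theta> t i * ((1 - \<tau> i \<theta>) * c i) * a i) +
        (if absorbing P i then 0 else alive \<pi> P \<rho> \<theta> t i * (1 - \<rho> i \<theta>) * K \<theta> i h * a h) +
        (if absorbing P i then 0 else alive \<pi> P \<rho> \<theta> t i * (1 - \<rho> i \<theta>) * K \<theta> i l * a l)"
      proof (cases "absorbing P i")
        case False
        then have r: "1 - \<rho> i \<theta> = (1 - \<tau> i \<theta>) * (1 - c i)" using rel[of i] i by simp
        show ?thesis using False unfolding r by (simp add: algebra_simps)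
      qed simp
    qed
    also have "\<dots> = X' t + Y (Suc t)"
      unfolding X'_def Y_def alive.simps by (simp add: sum.distrib sum_distrib_right if_distrib[of "\<lambda>x. x * _"] cong: if_cong)
    finally show ?thesis .
  qed
  have Xn: "0 \<le> X t" for t unfolding X_def
    using v aln an by (auto simp: vs_def intro!: sum_nonneg mult_nonneg_nonneg)
  have Yn: "0 \<le> Y t" for t unfolding Y_def using aln an h l by (auto intro!: add_nonneg_nonneg mult_nonneg_nonneg)
  have X'n: "0 \<le> X' t" for t unfolding X'_def
    using vt c0 aln an by (auto intro!: sum_nonneg mult_nonneg_nonneg)
  have X'X: "X' t \<le> X t" for t unfolding X'_def X_def
  proof (rule sum_mono)
    fix i assume i: "i \<in> {..<n}"
    show "(if absorbing P i then 0 else alive \<pi> P \<rho> \<theta> t i * ((1 - \<tau> i \<theta>) * c i) * a i)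
        \<le> (if absorbing P i then 0 else alive \<pi> P \<rho> \<theta> t i * \<rho> i \<theta> * a i)"
    proof (cases "absorbing P i")
      case False
      have "(1 - \<tau> i \<theta>) * c i \<le> \<rho> i \<theta>" using rel[OF _ False] i vt[of i] by (simp add: algebra_simps)
      then have "alive \<pi> P \<rho> \<theta> t i * ((1 - \<tau> i \<theta>) * c i) \<le> alive \<pi> P \<rho> \<theta> t i * \<rho> i \<theta>"
        using aln[of i t] i by (simp add: mult_left_mono)
      then show ?thesis using False an[of i] i by (simp add: mult_right_mono)
    qed simp
  qed
  have sT: "summable T" unfolding T_def a_def by (rule probH_summable[OF v])
  have sX: "summable X" by (rule summable_comparison_test'[OF sT, of 0]) (use Xn Yn T_eq in auto)
  have sY: "summable Y" by (rule summable_comparison_test'[OF sT, of 0]) (use Xn Yn T_eq in auto)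
  have sX': "summable X'" by (rule summable_comparison_test'[OF sX, of 0]) (use X'n X'X in auto)
  have sYS: "summable (\<lambda>t. Y (Suc t))" using sY by (simp add: summable_Suc_iff)
  have sT': "summable T'"
    by (subst summable_Suc_iff[symmetric]) (simp add: T'S summable_add[OF sX' sYS])
  have "prob_actH \<pi> Q \<tau> \<theta> = suminf T'" unfolding prob_actH_def T'_def ..
  also have "\<dots> = T' 0 + (\<Sum>t. T' (Suc t))" using suminf_split_head[OF sT'] by simp
  also have "(\<Sum>t. T' (Suc t)) = suminf X' + (\<Sum>t. Y (Suc t))"
    unfolding T'S by (rule suminf_add[OF sX' sYS, symmetric])
  also have "(\<Sum>t. Y (Suc t)) = suminf Y - Y 0" by (rule suminf_split_head[OF sY])
  finally have eQ: "prob_actH \<pi> Q \<tau> \<theta> = suminf X' + suminf Y" using T'0 by simp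
  have "prob_actH \<pi> P \<rho> \<theta> = suminf T" unfolding prob_actH_def T_def a_def ..
  also have "\<dots> = suminf X + suminf Y" unfolding T_eq by (rule suminf_add[OF sX sY, symmetric])
  finally have eP: "prob_actH \<pi> P \<rho> \<theta> = suminf X + suminf Y" .
  show "prob_actH \<pi> Q \<tau> \<theta> = prob_actH \<pi> P \<rho> \<theta>
     - (\<Sum>t. \<Sum>i<n. if absorbing P i then 0 else alive \<pi> P \<rho> \<theta> t i * \<rho> i \<theta> * act P i)
     + (\<Sum>t. \<Sum>i<n. if absorbing P i then 0 else alive \<pi> P \<rho> \<theta> t i * ((1 - \<tau> i \<theta>) * c i) * act P i)"
    using eQ eP unfolding X_def[abs_def] X'_def[abs_def] a_def by simp
  show "(\<Sum>t. \<Sum>i<n. if absorbing P i then 0 else alive \<pi> P \<rho> \<theta> t i * ((1 - \<tau> i \<theta>) * c i) * act P i)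
       \<le> (\<Sum>t. \<Sum>i<n. if absorbing P i then 0 else alive \<pi> P \<rho> \<theta> t i * \<rho> i \<theta> * act P i)"
    using suminf_le[OF X'X sX' sX] unfolding X_def[abs_def] X'_def[abs_def] a_def by simp
qed

lemma compare_le:
  assumes v: "vs \<rho> \<theta>" and vt: "\<And>i. i < n \<Longrightarrow> 0 \<le> \<tau> i \<theta> \<and> \<tau> i \<theta> \<le> 1"
    and rel: "\<And>i. i < n \<Longrightarrow> \<not> absorbing P i \<Longrightarrow> 1 - \<rho> i \<theta> = (1 - \<tau> i \<theta>) * (1 - c i)"
  shows "prob_actH \<pi> Q \<tau> \<theta> \<le> prob_actH \<pi> P \<rho> \<theta>"
  using core[where \<rho>=\<rho> and \<tau>=\<tau> and \<theta>=\<theta>, OF v vt rel] by linarith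

lemma compare_eq:
  assumes v: "vs \<rho> \<theta>"
    and rel: "\<And>i. i < n \<Longrightarrow> \<not> absorbing P i \<Longrightarrow> 1 - \<rho> i \<theta> = 1 - c i"
  shows "prob_actH \<pi> Q z \<theta> = prob_actH \<pi> P \<rho> \<theta>"
proof -
  have rel': "\<And>i. i < n \<Longrightarrow> \<not> absorbing P i \<Longrightarrow> 1 - \<rho> i \<theta> = (1 - z i \<theta>) * (1 - c i)" using rel by simp
  have e: "(\<Sum>i<n. if absorbing P i then 0 else alive \<pi> P \<rho> \<theta> t i * ((1 - z i \<theta>) * c i) * act P i) =
        (\<Sum>i<n. if absorbing P i then 0 else alive \<pi> P \<rho> \<theta> t i * \<rho> i \<theta> * act P i)" for t
  proof (rule sum.cong[OF refl])
    fix i assume "i \<in> {..<n}"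
    then show "(if absorbing P i then 0 else alive \<pi> P \<rho> \<theta> t i * ((1 - z i \<theta>) * c i) * act P i) =
        (if absorbing P i then 0 else alive \<pi> P \<rho> \<theta> t i * \<rho> i \<theta> * act P i)"
      using rel[of i] by (cases "absorbing P i") auto
  qed
  show ?thesis using core(1)[where \<rho>=\<rho> and \<tau>=z and \<theta>=\<theta>, OF v _ rel'] unfolding e by simp
qed

end



theorem proposition2:
  fixes p :: real and \<pi> :: "theta \<Rightarrow> 's::finite \<Rightarrow> real" and P :: "'s protocol"
  assumes "0 < p" "p < 1"
    and "\<And>\<theta> s. \<pi> \<theta> s > 0"
    and "\<And>\<theta>. (\<Sum>s\<in>UNIV. \<pi> \<theta> s) = 1"
    and "\<pi> H \<noteq> \<pi> L"
    and "valid_protocol P"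
    and "simple \<pi> P"
    and "\<not> parsimonious \<pi> P"
  shows "\<exists>P' :: 's protocol. valid_protocol P' \<and> parsimonious \<pi> P' \<and> nst P' \<le> nst P \<and>
           URP p \<pi> P \<le> URP p \<pi> P'"
proof -
  note p = assms(1,2)
  interpret sprot \<pi> P
    by unfold_locales (use assms(3,4,6,7) in \<open>auto intro: less_imp_le\<close>)
  have "card {i. i < n \<and> absorbing P i} = 2" using assms(7) by (simp add: simple_def)
  then obtain h l where hl: "{i. i < n \<and> absorbing P i} = {h, l}" "h \<noteq> l"
    by (auto simp: card_2_iff)
  then have hn: "h < n" "l < n" by auto
  define \<sigma> where "\<sigma> = (SOME \<sigma>. \<sigma> \<in> br p \<pi> P)"
  have \<sigma>br: "\<sigma> \<in> br p \<pi> P" unfolding \<sigma>_def using br_ne by (rule someI_ex)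
  then have v\<sigma>: "valid_strategy P \<sigma>" by (simp add: br_def)
  define c where "c i = (if i < n then \<sigma> i H else 0)" for i
  have c01: "0 \<le> c i" "c i \<le> 1" for i using v\<sigma> by (auto simp: c_def valid_strategy_def)
  interpret constr \<pi> P h l c
    by unfold_locales (use hl hn c01 in auto)
  interpret Qs: sprot \<pi> Q by (rule Q_sprot)
  define \<sigma>' where "\<sigma>' = (SOME \<sigma>. \<sigma> \<in> br p \<pi> Q)"
  have \<sigma>'br: "\<sigma>' \<in> br p \<pi> Q" unfolding \<sigma>'_def using Qs.br_ne by (rule someI_ex)
  then have v\<sigma>': "valid_strategy Q \<sigma>'" by (simp add: br_def)
  have URP_P: "URP p \<pi> P = p * prob_actH \<pi> P \<sigma> H + (1 - p) * (1 - prob_actH \<pi> P \<sigma> L)"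
    unfolding URP_def \<sigma>_def[symmetric] UR_def using probL[OF valid_vs[OF v\<sigma>]] by simp
  have URP_Q: "URP p \<pi> Q = p * prob_actH \<pi> Q \<sigma>' H + (1 - p) * (1 - prob_actH \<pi> Q \<sigma>' L)"
    unfolding URP_def \<sigma>'_def[symmetric] UR_def using Qs.probL[OF Qs.valid_vs[OF v\<sigma>']] by simp
  have s1: "prob_actH \<pi> Q z H \<le> prob_actH \<pi> Q \<sigma>' H"
    by (rule Qs.sep[OF \<sigma>'br p Qs.vs_z])
  have s2: "prob_actH \<pi> Q z H = prob_actH \<pi> P \<sigma> H"
    by (rule compare_eq[OF valid_vs[OF v\<sigma>]]) (simp add: c_def)
  define \<rho> where "\<rho> i \<theta> = 1 - (1 - \<sigma>' i \<theta>) * (1 - c i)" for i \<theta>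
  have vt: "0 \<le> \<sigma>' i L \<and> \<sigma>' i L \<le> 1" if "i < n" for i
    using v\<sigma>' that by (simp add: valid_strategy_def mk_simps)
  have v\<rho>: "vs \<rho> L" unfolding vs_def
  proof (intro allI impI)
    fix i assume i: "i < n"
    have "0 \<le> (1 - \<sigma>' i L) * (1 - c i)" "(1 - \<sigma>' i L) * (1 - c i) \<le> 1"
      using vt[OF i] c01[of i] by (auto intro: mult_le_one)
    then show "0 \<le> \<rho> i L \<and> \<rho> i L \<le> 1" by (simp add: \<rho>_def)
  qed
  have s3: "prob_actH \<pi> Q \<sigma>' L \<le> prob_actH \<pi> P \<rho> L"
    by (rule compare_le[where \<rho>=\<rho> and \<tau>=\<sigma>' and \<theta>=L, OF v\<rho> vt]) (simp_all add: \<rho>_def)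
  have s4: "prob_actH \<pi> P \<rho> L \<le> prob_actH \<pi> P \<sigma> L" by (rule sep[OF \<sigma>br p v\<rho>])
  have "URP p \<pi> P \<le> URP p \<pi> Q"
    unfolding URP_P URP_Q
  proof (rule add_mono)
    show "p * prob_actH \<pi> P \<sigma> H \<le> p * prob_actH \<pi> Q \<sigma>' H"
      using s1 s2 p by (intro mult_left_mono) auto
    show "(1 - p) * (1 - prob_actH \<pi> P \<sigma> L) \<le> (1 - p) * (1 - prob_actH \<pi> Q \<sigma>' L)"
      using s3 s4 p by (intro mult_left_mono) auto
  qed
  then show ?thesis using Q_valid Q_pars by (intro exI[of _ Q]) (simp add: mk_simps)
qed


end
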